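(* Let $(p_{nm})_{n,m\in\{0,1,2\}}$ be a probability vector with $p_{01}=p_{02}=0$, let $\mathcal{N}$ be the qutrit Pauli channel with these probabilities, and let the initial shared state be $\sigma=\sum_{n,m}p_{nm}|\Phi^{n,m}\rangle\langle\Phi^{n,m}|$ (fidelity $p_{00}$). Let $F_N$ denote the fidelity $\langle\Phi^{0,0}|\rho_N|\Phi^{0,0}\rangle$ of the shared state $\rho_N$ after $N$ successful rounds of the single-carrier protocol (described in the context) without any pre-processing. Then $F_N\to 1$ as $N\to\infty$ if and only if $$p_{00}>\max\{p_{10}+p_{11}+p_{12},\;p_{20}+p_{21}+p_{22}\}.$$
   Context: Let $\omega=e^{2\pi i/3}$ and on $\mathbb{C}^3$ with basis $|0\rangle,|1\rangle,|2\rangle$ define $X|j\rangle=|(j+1)\bmod 3\rangle$, $Z|j\rangle=\omega^j|j\rangle$. The two-qutrit Bell states are $|\Phi^{n,m}\rangle=\frac{1}{\sqrt3}\sum_{j=0}^2\omega^{mj}|j,(j+n)\bmod 3\rangle$, $n,m\in\{0,1,2\}$. The qutrit Pauli channel with probabilities $p_{nm}$ is $\mathcal{N}(\rho)=\sum_{n,m}p_{nm}Z^mX^n\rho X^{-n}Z^{-m}$; sending one half of $|\Phi^{0,0}\rangle$ through it gives $\sigma=\sum p_{nm}|\Phi^{n,m}\rangle\langle\Phi^{n,m}|$. Single-carrier protocol round: Alice (holding qutrit $A$ of the shared pair) prepares a carrier qutrit $T$ in $|0\rangle$ and applies $U_{CN}|j\rangle_A|k\rangle_T=|j\rangle_A|(j+k)\bmod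 3\rangle_T$; the carrier is sent to Bob through the same channel $\mathcal{N}$; Bob (holding qutrit $B$) applies $U_{CN'}|j\rangle_B|k\rangle_T=|j\rangle_B|(k-j)\bmod 3\rangle_T$ and measures $T$ in the computational basis; the round succeeds if the outcome is $0$, in which case the post-measurement state of $AB$ is kept. Successive rounds act on the kept state of the previous round, each with a fresh carrier sent through $\mathcal{N}$. *)

theory Defs
  imports "HOL-Analysis.Analysis"
begin

text \<open>Operators are represented by their matrix entries, indexed by an index type;
  a qutrit index is a natural number in trits = {0,1,2}; two-qutrit (A,B) indices
  are pairs (a,b); three-qutrit (A,B,T) indices are ((a,b),t).\<close>

type_synonym 'i op = "'i \<Rightarrow> 'i \<Rightarrow> complex"

definition omega :: complex where "omega = cis (2 * pi / 3)"

definition trits :: "nat set" where "trits = {0, 1, 2}"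

definition I2 :: "(nat \<times> nat) set" where "I2 = trits \<times> trits"

definition I3 :: "((nat \<times> nat) \<times> nat) set" where "I3 = (trits \<times> trits) \<times> trits"

definition mmult :: "'i set \<Rightarrow> 'i op \<Rightarrow> 'i op \<Rightarrow> 'i op" where
  "mmult I A B = (\<lambda>x y. \<Sum>z\<in>I. A x z * B z y)"

definition adj :: "'i op \<Rightarrow> 'i op" where
  "adj A = (\<lambda>x y. cnj (A y x))"

definition idop :: "'i op" where
  "idop = (\<lambda>x y. if x = y then 1 else 0)"

fun mpow :: "'i set \<Rightarrow> 'i op \<Rightarrow> nat \<Rightarrow> 'i op" where
  "mpow I A 0 = idop"
| "mpow I A (Suc k) = mmult I A (mpow I A k)"

definition conj_by :: "'i set \<Rightarrow> 'i op \<Rightarrow> 'i op \<Rightarrow> 'i op" where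
  "conj_by I U rho = mmult I (mmult I U rho) (adj U)"

definition trace :: "'i set \<Rightarrow> 'i op \<Rightarrow> complex" where
  "trace I A = (\<Sum>x\<in>I. A x x)"

definition Xq :: "nat op" where
  "Xq = (\<lambda>i j. if i = (j + 1) mod 3 then 1 else 0)"

definition Zq :: "nat op" where
  "Zq = (\<lambda>i j. if i = j then omega ^ j else 0)"

definition pauli_op :: "nat \<Rightarrow> nat \<Rightarrow> nat op" where
  "pauli_op n m = mmult trits (mpow trits Zq m) (mpow trits Xq n)"

definition pauli_channel :: "(nat \<Rightarrow> nat \<Rightarrow> real) \<Rightarrow> nat op \<Rightarrow> nat op" where
  "pauli_channel p rho = (\<lambda>x y. \<Sum>n\<in>trits. \<Sum>m\<in>trits.
      complex_of_real (p n m) * conj_by trits (pauli_op n m) rho x y)"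

definition on_T :: "nat op \<Rightarrow> ((nat \<times> nat) \<times> nat) op" where
  "on_T U = (\<lambda>(ab, t) (ab', t'). if ab = ab' then U t t' else 0)"

definition channel_T :: "(nat \<Rightarrow> nat \<Rightarrow> real) \<Rightarrow> ((nat \<times> nat) \<times> nat) op \<Rightarrow> ((nat \<times> nat) \<times> nat) op" where
  "channel_T p R = (\<lambda>x y. \<Sum>n\<in>trits. \<Sum>m\<in>trits.
      complex_of_real (p n m) * conj_by I3 (on_T (pauli_op n m)) R x y)"

definition U_CN :: "((nat \<times> nat) \<times> nat) op" where
  "U_CN = (\<lambda>((a, b), t) ((a', b'), t').
      if a = a' \<and> b = b' \<and> t = (a' + t') mod 3 then 1 else 0)"

definition U_CN' :: "((nat \<times> nat) \<times> nat) op" where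
  "U_CN' = (\<lambda>((a, b), t) ((a', b'), t').
      if a = a' \<and> b = b' \<and> t = (t' + 3 - b') mod 3 then 1 else 0)"

definition attach_carrier :: "(nat \<times> nat) op \<Rightarrow> ((nat \<times> nat) \<times> nat) op" where
  "attach_carrier rho = (\<lambda>(ab, t) (ab', t'). if t = 0 \<and> t' = 0 then rho ab ab' else 0)"

definition post_select :: "((nat \<times> nat) \<times> nat) op \<Rightarrow> (nat \<times> nat) op" where
  "post_select R = (\<lambda>ab ab'. R (ab, 0) (ab', 0))"

definition protocol_round :: "(nat \<Rightarrow> nat \<Rightarrow> real) \<Rightarrow> (nat \<times> nat) op \<Rightarrow> (nat \<times> nat) op" where
  "protocol_round p rho =
     (let R = conj_by I3 U_CN' (channel_T p (conj_by I3 U_CN (attach_carrier rho)));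
          S = post_select R
      in (\<lambda>x y. S x y / trace I2 S))"

definition bell :: "nat \<Rightarrow> nat \<Rightarrow> nat \<times> nat \<Rightarrow> complex" where
  "bell n m = (\<lambda>(j, k). if k = (j + n) mod 3 then omega ^ (m * j) / complex_of_real (sqrt 3) else 0)"

definition proj :: "('i \<Rightarrow> complex) \<Rightarrow> 'i op" where
  "proj v = (\<lambda>x y. v x * cnj (v y))"

definition bell_diag :: "(nat \<Rightarrow> nat \<Rightarrow> real) \<Rightarrow> (nat \<times> nat) op" where
  "bell_diag p = (\<lambda>x y. \<Sum>n\<in>trits. \<Sum>m\<in>trits. complex_of_real (p n m) * proj (bell n m) x y)"

definition fidelity :: "(nat \<times> nat) op \<Rightarrow> complex" where
  "fidelity rho = (\<Sum>x\<in>I2. \<Sum>y\<in>I2. cnj (bell 0 0 x) * rho x y * bell 0 0 y)"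

end

theory Submission imports Defs begin

lemma lt3: "(t::nat) < 3 \<longleftrightarrow> t = 0 \<or> t = 1 \<or> t = 2" by auto
lemma mem_trits: "n \<in> trits \<longleftrightarrow> n < 3" by (auto simp: trits_def)
lemma fin_trits[simp]: "finite trits" by (simp add: trits_def)
lemma fin_I3[simp]: "finite I3" by (simp add: I3_def)
lemma fin_I2[simp]: "finite I2" by (simp add: I2_def)
lemma mem_I3: "((a,b),t) \<in> I3 \<longleftrightarrow> a < 3 \<and> b < 3 \<and> t < 3" by (auto simp: I3_def mem_trits)
lemma mem_I2: "(a,b) \<in> I2 \<longleftrightarrow> a < 3 \<and> b < 3" by (auto simp: I2_def mem_trits)
lemma sum_trits: "(\<Sum>a\<in>trits. f a) = f 0 + f 1 + f 2" by (simp add: trits_def add.assoc)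
lemma sum_I2: "(\<Sum>z\<in>I2. f z) = (\<Sum>a\<in>trits. \<Sum>b\<in>trits. f (a,b))"
  unfolding I2_def by (simp add: sum.cartesian_product)

lemma omega_cnj_mult[simp]: "omega ^ k * cnj omega ^ k = 1"
  unfolding omega_def by (simp add: cis_cnj cis_mult flip: power_mult_distrib)

lemma sqrt3sq[simp]: "complex_of_real (sqrt 3) * complex_of_real (sqrt 3) = 3"
  by (simp flip: of_real_mult)

lemma omega_cnj1[simp]: "omega * cnj omega = 1"
  using omega_cnj_mult[of 1] by simp

lemma conj_perm:
  assumes fin: "finite I" and U: "\<And>x w. x\<in>I \<Longrightarrow> w\<in>I \<Longrightarrow> U x w = (if w = g x then \<phi> x else 0)"
    and g: "\<And>x. x\<in>I \<Longrightarrow> g x \<in> I" and x: "x\<in>I" and y: "y\<in>I"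
  shows "conj_by I U R x y = \<phi> x * cnj (\<phi> y) * R (g x) (g y)"
proof -
  have 1: "mmult I U R x z = \<phi> x * R (g x) z" for z
  proof -
    have "mmult I U R x z = (\<Sum>w\<in>I. if w = g x then \<phi> x * R w z else 0)"
      unfolding mmult_def by (rule sum.cong) (auto simp: U[OF x])
    then show ?thesis using fin g[OF x] by simp
  qed
  have "conj_by I U R x y = (\<Sum>z\<in>I. if z = g y then \<phi> x * R (g x) z * cnj (\<phi> y) else 0)"
    unfolding conj_by_def mmult_def[of I "mmult I U R"] adj_def 1 by (rule sum.cong) (auto simp: U[OF y])
  then show ?thesis using fin g[OF y] by simp
qed

lemma mpow_Z: "t < 3 \<Longrightarrow> s < 3 \<Longrightarrow> mpow trits Zq m t s = (if t = s then omega^(m*t) else 0)"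
proof (induction m arbitrary: t s)
  case 0 then show ?case by (simp add: idop_def)
next
  case (Suc m)
  have "mpow trits Zq (Suc m) t s = (\<Sum>z\<in>trits. if z = t then Zq t t * mpow trits Zq m t s else 0)"
    unfolding mpow.simps mmult_def by (rule sum.cong) (auto simp: Zq_def)
  also have "\<dots> = Zq t t * mpow trits Zq m t s" using Suc.prems by (simp add: mem_trits)
  finally show ?case using Suc by (simp add: Zq_def power_add)
qed

lemma mpow_X: "t < 3 \<Longrightarrow> s < 3 \<Longrightarrow> mpow trits Xq n t s = (if t = (s + n) mod 3 then 1 else 0)"
proof (induction n arbitrary: t s)
  case 0 then show ?case by (simp add: idop_def)
next
  case (Suc n)
  have "mpow trits Xq (Suc n) t s = (\<Sum>z\<in>trits. if z = (s+n) mod 3 then Xq t z else 0)"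
    unfolding mpow.simps mmult_def by (rule sum.cong) (auto simp: Suc.IH Suc.prems mem_trits)
  also have "\<dots> = Xq t ((s+n) mod 3)" by (simp add: mem_trits)
  finally show ?case by (simp add: Xq_def mod_Suc_eq)
qed

lemma pauli_val: "t < 3 \<Longrightarrow> s < 3 \<Longrightarrow> n < 3 \<Longrightarrow>
   pauli_op n m t s = (if s = (t + 3 - n) mod 3 then omega^(m*t) else 0)"
proof -
  assume h: "t < 3" "s < 3" "n < 3"
  have "pauli_op n m t s = (\<Sum>z\<in>trits. if z = t then omega^(m*t) * mpow trits Xq n t s else 0)"
    unfolding pauli_op_def mmult_def by (rule sum.cong) (auto simp: mpow_Z mem_trits h)
  also have "\<dots> = omega^(m*t) * mpow trits Xq n t s" using h by (simp add: mem_trits)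
  also have "\<dots> = (if t = (s + n) mod 3 then omega^(m*t) else 0)" using h by (simp add: mpow_X)
  moreover have "(t = (s + n) mod 3) = (s = (t + 3 - n) mod 3)" using h unfolding lt3 by (elim disjE) simp_all
  ultimately show ?thesis by simp
qed

lemma ar1: "(a::nat)<3 \<Longrightarrow> t<3 \<Longrightarrow> s<3 \<Longrightarrow> (t = (a+s) mod 3) = (s = (t+3-a) mod 3)"
  unfolding lt3 by (elim disjE) simp_all
lemma ar2: "(b::nat)<3 \<Longrightarrow> t<3 \<Longrightarrow> s<3 \<Longrightarrow> (t = (s+3-b) mod 3) = (s = (t+b) mod 3)"
  unfolding lt3 by (elim disjE) simp_all

definition gCN :: "(nat \<times> nat) \<times> nat \<Rightarrow> (nat \<times> nat) \<times> nat" where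
  "gCN x = (fst x, (snd x + 3 - fst (fst x)) mod 3)"
definition gCN' :: "(nat \<times> nat) \<times> nat \<Rightarrow> (nat \<times> nat) \<times> nat" where
  "gCN' x = (fst x, (snd x + snd (fst x)) mod 3)"
definition gT :: "nat \<Rightarrow> (nat \<times> nat) \<times> nat \<Rightarrow> (nat \<times> nat) \<times> nat" where
  "gT n x = (fst x, (snd x + 3 - n) mod 3)"

lemma gCN_I3: "x \<in> I3 \<Longrightarrow> gCN x \<in> I3"
  by (cases x) (auto simp: gCN_def mem_I3)
lemma gCN'_I3: "x \<in> I3 \<Longrightarrow> gCN' x \<in> I3"
  by (cases x) (auto simp: gCN'_def mem_I3)
lemma gT_I3: "x \<in> I3 \<Longrightarrow> gT n x \<in> I3"
  by (cases x) (auto simp: gT_def mem_I3)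

lemma U_CN_perm: "x\<in>I3 \<Longrightarrow> w\<in>I3 \<Longrightarrow> U_CN x w = (if w = gCN x then 1 else 0)"
  apply (cases x, cases w)
  apply (auto simp: U_CN_def gCN_def mem_I3 ar1 split: if_splits)
  done

lemma U_CN'_perm: "x\<in>I3 \<Longrightarrow> w\<in>I3 \<Longrightarrow> U_CN' x w = (if w = gCN' x then 1 else 0)"
  apply (cases x, cases w)
  apply (auto simp: U_CN'_def gCN'_def mem_I3 ar2 split: if_splits)
  done

lemma on_T_perm: "n < 3 \<Longrightarrow> x\<in>I3 \<Longrightarrow> w\<in>I3 \<Longrightarrow>
   on_T (pauli_op n m) x w = (if w = gT n x then omega^(m * snd x) else 0)"
  apply (cases x, cases w)
  apply (auto simp: on_T_def gT_def mem_I3 pauli_val)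
  done

definition Cm :: "(nat \<Rightarrow> nat \<Rightarrow> real) \<Rightarrow> (nat \<times> nat) op" where
  "Cm p = (\<lambda>(a,b) (a',b'). \<Sum>n\<in>trits. \<Sum>m\<in>trits. complex_of_real (p n m) *
     (omega^(m*b) * cnj (omega^(m*b'))) *
     (if ((b+3-n) mod 3 + 3 - a) mod 3 = 0 \<and> ((b'+3-n) mod 3 + 3 - a') mod 3 = 0 then 1 else 0))"

lemma S_formula:
  assumes x: "x \<in> I2" and y: "y \<in> I2"
  shows "post_select (conj_by I3 U_CN' (channel_T p (conj_by I3 U_CN (attach_carrier rho)))) x y
     = Cm p x y * rho x y"
proof -
  obtain a b where ab: "x = (a,b)" by (cases x)
  obtain a' b' where ab': "y = (a',b')" by (cases y)
  have h: "a < 3" "b < 3" "a' < 3" "b' < 3" using x y ab ab' by (auto simp: mem_I2)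
  have X: "((a,b),0) \<in> I3" "((a',b'),0) \<in> I3" using h by (auto simp: mem_I3)
  have c1: "conj_by I3 U_CN' R ((a,b),0) ((a',b'),0) = R ((a,b),b) ((a',b'),b')" for R
    using conj_perm[where R=R and \<phi>="\<lambda>_. 1", OF fin_I3 U_CN'_perm gCN'_I3 X] h by (simp add: gCN'_def)
  have XX: "((a,b),b) \<in> I3" "((a',b'),b') \<in> I3" using h by (auto simp: mem_I3)
  have c2: "conj_by I3 (on_T (pauli_op n m)) R ((a,b),b) ((a',b'),b') =
     omega^(m*b) * cnj (omega^(m*b')) * R ((a,b),(b+3-n) mod 3) ((a',b'),(b'+3-n) mod 3)"
    if "n \<in> trits" for n m R
    using conj_perm[where R=R, OF fin_I3 on_T_perm[OF that[unfolded mem_trits]] gT_I3 XX] by (simp add: gT_def mem_trits)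
  have XXX: "((a,b),(b+3-n) mod 3) \<in> I3" "((a',b'),(b'+3-n) mod 3) \<in> I3" for n
    using h by (auto simp: mem_I3)
  have c3: "conj_by I3 U_CN R ((a,b),(b+3-n) mod 3) ((a',b'),(b'+3-n) mod 3) =
     R ((a,b),((b+3-n) mod 3 + 3 - a) mod 3) ((a',b'),((b'+3-n) mod 3 + 3 - a') mod 3)" for n R
    using conj_perm[where R=R and \<phi>="\<lambda>_. 1", OF fin_I3 U_CN_perm gCN_I3 XXX] by (simp add: gCN_def)
  show ?thesis
    unfolding ab ab' post_select_def c1 channel_T_def Cm_def
    apply (simp add: c2 c3 attach_carrier_def sum_distrib_right cong: sum.cong)
    apply (intro sum.cong refl)
    apply simp
    done
qed

lemma round_formula: "x \<in> I2 \<Longrightarrow> y \<in> I2 \<Longrightarrow>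
  protocol_round p rho x y = Cm p x y * rho x y / (\<Sum>z\<in>I2. Cm p z z * rho z z)"
  unfolding protocol_round_def Let_def trace_def by (simp add: S_formula cong: sum.cong)

definition PP :: "(nat \<Rightarrow> nat \<Rightarrow> real) \<Rightarrow> nat \<Rightarrow> real" where
  "PP p n = p n 0 + p n 1 + p n 2"

lemma bell_cnj: "bell n m x * cnj (bell n m x) = (if snd x = (fst x + n) mod 3 then 1/3 else 0)"
proof -
  have s: "complex_of_real (sqrt 3) * complex_of_real (sqrt 3) = 3"
    by (simp flip: of_real_mult)
  show ?thesis by (cases x) (auto simp: bell_def s)
qed

lemma diag_vals: "a < 3 \<Longrightarrow> b < 3 \<Longrightarrow>
  bell_diag p (a,b) (a,b) = of_real (PP p ((b+3-a) mod 3)) / 3 \<and>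
  Cm p (a,b) (a,b) = of_real (PP p ((b+3-a) mod 3))"
  unfolding lt3 by (elim disjE) (simp_all add: bell_diag_def proj_def bell_cnj Cm_def sum_trits PP_def)

lemma s3: "cnj (1 / complex_of_real (sqrt 3)) * z * (1 / complex_of_real (sqrt 3)) = z / 3"
proof -
  have s: "complex_of_real (sqrt 3) * complex_of_real (sqrt 3) = 3"
    by (simp flip: of_real_mult)
  show ?thesis by (simp add: field_simps s)
qed

lemma spec_vals: "p 0 1 = 0 \<Longrightarrow> p 0 2 = 0 \<Longrightarrow> a < 3 \<Longrightarrow> a' < 3 \<Longrightarrow>
  bell_diag p (a,a) (a',a') = of_real (p 0 0) / 3 \<and> Cm p (a,a) (a',a') = of_real (p 0 0)"
  unfolding lt3 by (elim disjE) (simp_all add: bell_diag_def proj_def bell_def Cm_def sum_trits s3)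

definition cc :: "(nat \<Rightarrow> nat \<Rightarrow> real) \<Rightarrow> nat \<Rightarrow> complex" where
  "cc p N = (\<Sum>z\<in>I2. bell_diag p z z * Cm p z z ^ N)"

lemma cc_val: "cc p N = of_real (PP p 0 ^ (N+1) + PP p 1 ^ (N+1) + PP p 2 ^ (N+1))"
proof -
  have e: "of_real x / 3 * of_real x ^ N + of_real x / 3 * of_real x ^ N + of_real x / 3 * of_real x ^ N
     = (of_real (x ^ (N+1)) :: complex)" for x :: real
    by (simp add: field_simps)
  show ?thesis unfolding cc_def sum_I2 sum_trits
    by (simp add: diag_vals e)
qed

lemma fid_formula: "fidelity rho = (\<Sum>a\<in>trits. \<Sum>a'\<in>trits. rho (a,a) (a',a')) / 3"
proof -
  have b: "bell 0 0 x = (if fst x = snd x then 1 / complex_of_real (sqrt 3) else 0)" if "x \<in> I2" for x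
    using that by (cases x) (auto simp: bell_def mem_I2)
  have "fidelity rho = (\<Sum>x\<in>I2. if fst x = snd x then (\<Sum>y\<in>I2. if fst y = snd y then rho x y / 3 else 0) else 0)"
    unfolding fidelity_def by (rule sum.cong[OF refl]) (auto simp: b s3 intro!: sum.cong)
  also have "\<dots> = (\<Sum>a\<in>trits. \<Sum>a'\<in>trits. rho (a,a) (a',a') / 3)"
    unfolding sum_I2 by (simp add: sum_trits)
  finally show ?thesis by (simp add: sum_divide_distrib)
qed

lemma PP_pos:
  assumes nonneg: "\<forall>n\<in>trits. \<forall>m\<in>trits. p n m \<ge> 0"
    and normalised: "(\<Sum>n\<in>trits. \<Sum>m\<in>trits. p n m) = 1"
  shows "PP p 0 \<ge> 0" "PP p 1 \<ge> 0" "PP p 2 \<ge> 0" "PP p 0 + PP p 1 + PP p 2 = 1"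
  using nonneg normalised by (auto simp: PP_def sum_trits trits_def)

lemma cc_nz:
  assumes nonneg: "\<forall>n\<in>trits. \<forall>m\<in>trits. p n m \<ge> 0"
    and normalised: "(\<Sum>n\<in>trits. \<Sum>m\<in>trits. p n m) = 1"
  shows "cc p N \<noteq> 0"
proof -
  note P = PP_pos[OF nonneg normalised]
  have "PP p 0 > 0 \<or> PP p 1 > 0 \<or> PP p 2 > 0" using P by linarith
  then have "PP p 0 ^ (N+1) > 0 \<or> PP p 1 ^ (N+1) > 0 \<or> PP p 2 ^ (N+1) > 0"
    by (metis zero_less_power)
  moreover have "PP p 0 ^ (N+1) \<ge> 0" "PP p 1 ^ (N+1) \<ge> 0" "PP p 2 ^ (N+1) \<ge> 0"
    using P by (metis zero_le_power)+
  ultimately have "PP p 0 ^ (N+1) + PP p 1 ^ (N+1) + PP p 2 ^ (N+1) > 0"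
    by linarith
  then show ?thesis unfolding cc_val by (metis less_irrefl of_real_eq_0_iff)
qed

lemma iter_formula:
  assumes nonneg: "\<forall>n\<in>trits. \<forall>m\<in>trits. p n m \<ge> 0"
    and normalised: "(\<Sum>n\<in>trits. \<Sum>m\<in>trits. p n m) = 1"
  shows "\<forall>x\<in>I2. \<forall>y\<in>I2. (protocol_round p ^^ N) (bell_diag p) x y = bell_diag p x y * Cm p x y ^ N / cc p N"
proof (induction N)
  case 0
  have "cc p 0 = 1" using PP_pos[OF nonneg normalised] by (simp add: cc_val)
  then show ?case by simp
next
  case (Suc N)
  have nz: "cc p N \<noteq> 0" "cc p (Suc N) \<noteq> 0" using cc_nz[OF nonneg normalised] by auto
  have s: "(\<Sum>z\<in>I2. Cm p z z * (protocol_round p ^^ N) (bell_diag p) z z) = cc p (Suc N) / cc p N"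
    unfolding cc_def[of p "Suc N"] sum_divide_distrib using Suc.IH
    by (intro sum.cong) (auto simp: algebra_simps)
  show ?case
  proof (intro ballI)
    fix x y assume x: "x \<in> I2" and y: "y \<in> I2"
    show "(protocol_round p ^^ Suc N) (bell_diag p) x y = bell_diag p x y * Cm p x y ^ Suc N / cc p (Suc N)"
      using nz Suc.IH x y by (simp add: round_formula[OF x y] s field_simps)
  qed
qed

lemma lim_crit3:
  fixes a b c :: real
  assumes "a \<ge> 0" "b \<ge> 0" "c \<ge> 0" "a + b + c = 1"
  shows "(\<lambda>N. a^(N+1) / (a^(N+1) + b^(N+1) + c^(N+1))) \<longlonglongrightarrow> 1 \<longleftrightarrow> a > max b c"
proof
  assume lim: "(\<lambda>N. a^(N+1) / (a^(N+1) + b^(N+1) + c^(N+1))) \<longlonglongrightarrow> 1"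
  show "a > max b c"
  proof (rule ccontr)
    assume "\<not> a > max b c"
    then have ab: "a \<le> b \<or> a \<le> c" by auto
    have le: "a^(N+1) / (a^(N+1) + b^(N+1) + c^(N+1)) \<le> 1/2" for N
    proof -
      have "a^(N+1) \<le> b^(N+1) + c^(N+1)"
        using ab assms power_mono[of a b "N+1"] power_mono[of a c "N+1"]
        by (auto intro: add_increasing add_increasing2)
      moreover have "a^(N+1) \<ge> 0" using assms by simp
      ultimately show ?thesis
        by (cases "a^(N+1) + b^(N+1) + c^(N+1) = 0") (auto simp: divide_le_eq)
    qed
    have "1 \<le> (1/2::real)"
      by (rule LIMSEQ_le_const2[OF lim]) (use le in auto)
    then show False by simp
  qed
next
  assume g: "a > max b c"
  then have a0: "a > 0" using assms by auto
  have "(\<lambda>N. (b/a)^N) \<longlonglongrightarrow> 0" "(\<lambda>N. (c/a)^N) \<longlonglongrightarrow> 0"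
    using g assms a0 by (auto intro!: LIMSEQ_power_zero simp: divide_less_eq)
  from LIMSEQ_Suc[OF this(1)] LIMSEQ_Suc[OF this(2)]
  have bz: "(\<lambda>N. (b/a)^(N+1)) \<longlonglongrightarrow> 0" "(\<lambda>N. (c/a)^(N+1)) \<longlonglongrightarrow> 0"
    by simp_all
  have eq: "a^(N+1) / (a^(N+1) + b^(N+1) + c^(N+1)) = 1 / (1 + (b/a)^(N+1) + (c/a)^(N+1))" for N
    using a0 by (simp add: power_divide field_simps)
  have "(\<lambda>N. 1 / (1 + (b/a)^(N+1) + (c/a)^(N+1))) \<longlonglongrightarrow> 1 / (1 + 0 + 0)"
    by (intro tendsto_intros bz) simp
  then show "(\<lambda>N. a^(N+1) / (a^(N+1) + b^(N+1) + c^(N+1))) \<longlonglongrightarrow> 1"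
    unfolding eq by simp
qed

theorem proposition1:
  fixes p :: "nat \<Rightarrow> nat \<Rightarrow> real"
  assumes nonneg: "\<forall>n\<in>trits. \<forall>m\<in>trits. p n m \<ge> 0"
    and normalised: "(\<Sum>n\<in>trits. \<Sum>m\<in>trits. p n m) = 1"
    and p01: "p 0 1 = 0" and p02: "p 0 2 = 0"
  shows "(\<lambda>N. fidelity ((protocol_round p ^^ N) (bell_diag p))) \<longlonglongrightarrow> 1
    \<longleftrightarrow> p 0 0 > max (p 1 0 + p 1 1 + p 1 2) (p 2 0 + p 2 1 + p 2 2)"
proof -
  note IT = iter_formula[OF nonneg normalised]
  have P0: "PP p 0 = p 0 0" using p01 p02 by (simp add: PP_def)
  have val: "(protocol_round p ^^ N) (bell_diag p) (a,a) (a',a') = of_real (p 0 0) / 3 * of_real (p 0 0) ^ N / cc p N"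
    if "a \<in> trits" "a' \<in> trits" for a a' N
  proof -
    have i: "(a,a) \<in> I2" "(a',a') \<in> I2" "a < 3" "a' < 3" using that by (auto simp: mem_I2 mem_trits)
    note sv = spec_vals[where p=p, OF p01 p02 i(3,4)]
    have "(protocol_round p ^^ N) (bell_diag p) (a,a) (a',a') = bell_diag p (a,a) (a',a') * Cm p (a,a) (a',a') ^ N / cc p N"
      using IT[of N] i(1,2) by blast
    then show ?thesis unfolding sv[THEN conjunct1] sv[THEN conjunct2] .
  qed
  have F: "fidelity ((protocol_round p ^^ N) (bell_diag p)) =
     of_real (PP p 0 ^ (N+1) / (PP p 0 ^ (N+1) + PP p 1 ^ (N+1) + PP p 2 ^ (N+1)))" for N
  proof -
    have "fidelity ((protocol_round p ^^ N) (bell_diag p)) = 3 * (of_real (p 0 0) / 3 * of_real (p 0 0) ^ N / cc p N)"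
      unfolding fid_formula by (simp add: val sum_trits trits_def)
    also have "\<dots> = of_real (p 0 0 ^ (N+1)) / cc p N" by simp
    finally show ?thesis unfolding cc_val P0 by simp
  qed
  note P = PP_pos[OF nonneg normalised]
  have "(\<lambda>N. fidelity ((protocol_round p ^^ N) (bell_diag p))) \<longlonglongrightarrow> 1 \<longleftrightarrow>
     (\<lambda>N. PP p 0 ^ (N+1) / (PP p 0 ^ (N+1) + PP p 1 ^ (N+1) + PP p 2 ^ (N+1))) \<longlonglongrightarrow> 1"
    unfolding F using tendsto_of_real_iff[where 'a=complex and c=1 and F=sequentially and
      f="\<lambda>N. PP p 0 ^ (N+1) / (PP p 0 ^ (N+1) + PP p 1 ^ (N+1) + PP p 2 ^ (N+1))"]
    by (simp only: of_real_1)
  also have "\<dots> \<longleftrightarrow> PP p 0 > max (PP p 1) (PP p 2)"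
    by (rule lim_crit3) (use P in auto)
  finally show ?thesis unfolding P0 by (simp add: PP_def)
qed

end
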